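(* Let $A\in S^n_+$, $b\in\mathbb{R}^n$, $c\in\mathbb{R}$, $r>0$. If $A$ is not nonexpansive, then $f(x)=\frac r2\langle x,Ax\rangle+\langle b,x\rangle+c$ is not the Moreau envelope $e_rg$ of any proper, lower semicontinuous, convex function $g$.
   Context: $S^n_+$ is the set of symmetric positive semidefinite $n\times n$ matrices; $A$ is nonexpansive if $\|Ax-Ay\|\le\|x-y\|$ for all $x,y$. $e_rg(x)=\inf_y\{g(y)+\frac r2\|y-x\|^2\}$. *)

theory Defs
  imports "HOL-Analysis.Analysis" "HOL-Library.Extended_Real"
begin

definition psd_sym :: "real^'n^'n \<Rightarrow> bool" where
  "psd_sym A \<longleftrightarrow> transpose A = A \<and> (\<forall>x. 0 \<le> x \<bullet> (A *v x))"

definition nonexpansive :: "('a::real_normed_vector \<Rightarrow> 'b::real_normed_vector) \<Rightarrow> bool" where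
  "nonexpansive T \<longleftrightarrow> (\<forall>x y. norm (T x - T y) \<le> norm (x - y))"

definition proper_fun :: "('a \<Rightarrow> ereal) \<Rightarrow> bool" where
  "proper_fun g \<longleftrightarrow> (\<forall>x. g x \<noteq> -\<infinity>) \<and> (\<exists>x. g x \<noteq> \<infinity>)"

definition convex_ext :: "('a::real_vector \<Rightarrow> ereal) \<Rightarrow> bool" where
  "convex_ext g \<longleftrightarrow> convex {(x, t::real). g x \<le> ereal t}"

definition lsc_ext :: "('a::topological_space \<Rightarrow> ereal) \<Rightarrow> bool" where
  "lsc_ext g \<longleftrightarrow> (\<forall>t::ereal. closed {x. g x \<le> t})"

definition moreau_env :: "real \<Rightarrow> ('a::real_normed_vector \<Rightarrow> ereal) \<Rightarrow> 'a \<Rightarrow> ereal" where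
  "moreau_env r g x = (INF y. g y + ereal (r / 2 * (norm (y - x))\<^sup>2))"

end

theory Submission
  imports Defs
begin

lemma key_ineq:
  fixes g :: "real^'n \<Rightarrow> ereal" and F :: "real^'n \<Rightarrow> real"
  assumes env: "moreau_env r g = (\<lambda>x. ereal (F x))"
  shows "F d + F (-d) \<le> 2 * F 0 + r * (norm d)\<^sup>2"
proof -
  have le: "ereal (F x) \<le> g y + ereal (r / 2 * (norm (y - x))\<^sup>2)" for x y
  proof -
    have "ereal (F x) = moreau_env r g x" using env by simp
    also have "\<dots> \<le> g y + ereal (r / 2 * (norm (y - x))\<^sup>2)"
      unfolding moreau_env_def by (rule INF_lower) simp
    finally show ?thesis .
  qed
  have "ereal ((F d + F (-d) - r * (norm d)\<^sup>2) / 2) \<le> g y + ereal (r / 2 * (norm (y - 0))\<^sup>2)" for y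
  proof (cases "g y")
    case (real gv)
    have 1: "F d \<le> gv + r / 2 * (norm (y - d))\<^sup>2" using le[of d y] real by simp
    have 2: "F (-d) \<le> gv + r / 2 * (norm (y + d))\<^sup>2" using le[of "-d" y] real by simp
    have par: "(norm (y - d))\<^sup>2 + (norm (y + d))\<^sup>2 = 2 * (norm y)\<^sup>2 + 2 * (norm d)\<^sup>2"
      by (simp add: power2_norm_eq_inner inner_diff_left inner_diff_right inner_add_left inner_add_right inner_commute)
    have "(F d + F (-d) - r * (norm d)\<^sup>2) / 2 \<le> gv + r / 2 * (norm y)\<^sup>2"
      using 1 2 par by (simp add: field_simps) (smt (verit) distrib_left)
    then show ?thesis using real by simp
  next
    case PInf then show ?thesis by simp
  next
    case MInf
    then show ?thesis using le[of d y] by simp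
  qed
  then have "ereal ((F d + F (-d) - r * (norm d)\<^sup>2) / 2) \<le> moreau_env r g 0"
    unfolding moreau_env_def by (rule INF_greatest)
  then have "(F d + F (-d) - r * (norm d)\<^sup>2) / 2 \<le> F 0" using env by simp
  then show ?thesis by simp
qed

lemma psd_contraction:
  fixes A :: "real^'n^'n"
  assumes "psd_sym A" and le1: "\<And>d. d \<bullet> (A *v d) \<le> (norm d)\<^sup>2"
  shows "norm (A *v x) \<le> norm x"
proof -
  have sym: "transpose A = A" and psd: "\<And>x. 0 \<le> x \<bullet> (A *v x)"
    using assms(1) unfolding psd_sym_def by auto
  have symi: "u \<bullet> (A *v v) = (A *v u) \<bullet> v" for u v
    by (metis dot_lmul_matrix inner_commute sym vector_transpose_matrix)
  define v where "v = A *v x"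
  have "0 \<le> (x - v) \<bullet> (A *v (x - v))" by (rule psd)
  also have "\<dots> = x \<bullet> (A *v x) - 2 * (x \<bullet> (A *v v)) + v \<bullet> (A *v v)"
    by (simp add: matrix_vector_mult_diff_distrib inner_diff_left inner_diff_right symi[of v x] inner_commute)
  finally have a: "0 \<le> x \<bullet> (A *v x) - 2 * (x \<bullet> (A *v v)) + v \<bullet> (A *v v)" .
  have b: "x \<bullet> (A *v v) = (norm v)\<^sup>2" unfolding v_def
    by (simp add: symi power2_norm_eq_inner)
  have c: "v \<bullet> (A *v v) \<le> (norm v)\<^sup>2" by (rule le1)
  have "(norm v)\<^sup>2 \<le> (norm x)\<^sup>2" using a b c le1[of x] by linarith
  then show ?thesis unfolding v_def by (simp add: power2_le_iff_abs_le)
qed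

theorem proposition4p44:
  fixes A :: "real^'n^'n" and b :: "real^'n" and c r :: real
  assumes "psd_sym A" and "r > 0"
    and "\<not> nonexpansive (\<lambda>x. A *v x)"
  shows "\<not> (\<exists>g :: real^'n \<Rightarrow> ereal. proper_fun g \<and> lsc_ext g \<and> convex_ext g \<and>
            moreau_env r g = (\<lambda>x. ereal (r / 2 * (x \<bullet> (A *v x)) + b \<bullet> x + c)))"
proof
  assume "\<exists>g :: real^'n \<Rightarrow> ereal. proper_fun g \<and> lsc_ext g \<and> convex_ext g \<and>
            moreau_env r g = (\<lambda>x. ereal (r / 2 * (x \<bullet> (A *v x)) + b \<bullet> x + c))"
  then obtain g :: "real^'n \<Rightarrow> ereal" where
    env: "moreau_env r g = (\<lambda>x. ereal (r / 2 * (x \<bullet> (A *v x)) + b \<bullet> x + c))" by blast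
  have le1: "d \<bullet> (A *v d) \<le> (norm d)\<^sup>2" for d
  proof -
    have "r / 2 * (d \<bullet> (A *v d)) + b \<bullet> d + c + (r / 2 * ((-d) \<bullet> (A *v (-d))) + b \<bullet> (-d) + c)
       \<le> 2 * (r / 2 * (0 \<bullet> (A *v 0)) + b \<bullet> 0 + c) + r * (norm d)\<^sup>2"
      using key_ineq[OF env, of d] by simp
    moreover have "A *v (-d) = - (A *v d)"
      using matrix_vector_mult_diff_distrib[of A 0 d] by simp
    ultimately have "r * (d \<bullet> (A *v d)) \<le> r * (norm d)\<^sup>2"
      by (simp add: algebra_simps)
    then show ?thesis using assms(2) by simp
  qed
  have "nonexpansive (\<lambda>x. A *v x)"
    unfolding nonexpansive_def
    by (metis psd_contraction[OF assms(1) le1] matrix_vector_mult_diff_distrib)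
  then show False using assms(3) by simp
qed

end
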